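(* Let $f\in L^1(\Omega)$ with $f\ge0$, $f\not\equiv0$, and let $u\ge0$ be an entropy solution of $(-\Delta)^s_{p,\beta}u=f$ in $\Omega$, $u=0$ in $\mathbb R^N\setminus\Omega$. Then for every $w\in W^{s,p}_{\beta,0}(\Omega)\cap L^\infty(\Omega)$ such that $w\equiv0$ on the set $\{u>k\}$ for some $k>0$, we have $$\frac12\iint_{D_\Omega}|u(x)-u(y)|^{p-2}(u(x)-u(y))(w(x)-w(y))\,d\nu=\int_\Omega f\,w\,dx.$$
   Context: Standing assumptions: $s\in(0,1)$, $1<p<N$, $ps<N$, $0\le\beta<\frac{N-ps}{2}$, and $\Omega\subset\mathbb R^N$ is a smooth bounded domain containing the origin. Set $d\mu=|x|^{-2\beta}dx$ and $d\nu=\frac{dx\,dy}{|x-y|^{N+ps}|x|^\beta|y|^\beta}$. $D_\Omega=(\mathbb R^N\times\mathbb R^N)\setminus\big((\mathbb R^N\setminus\Omega)\times(\mathbb R^N\setminus\Omega)\big)$. $W^{s,p}_{\beta,0}(\Omega)$ is the closure of $C_c^\infty(\Omega)$ under the norm $(\int_\Omega|\phi|^pd\mu)^{1/p}+(\int_\Omega\int_\Omega|\phi(x)-\phi(y)|^pd\nu)^{1/p}$; its elements are extended by $0$ outside $\Omega$. For $k>0$, $T_k(a)=\max\{-k,\min\{k,a\}\}$. Entropy solution: given $f\in L^1(\Omega)$, a measurable $u$ vanishing outside $\Omega$ with $T_k(u)\in W^{s,p}_{\beta,0}(\Omega)$ for all $k>0$ is an entropy solution if (i) $\iint_{R_h}|u(x)-u(y)|^{p-1}d\nu\to0$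 as $h\to\infty$, where $R_h=\{(x,y)\in\mathbb R^N\times\mathbb R^N:\ h+1\le\max\{|u(x)|,|u(y)|\}$ and ($\min\{|u(x)|,|u(y)|\}\le h$ or $u(x)u(y)<0$)$\}$; and (ii) for all $k>0$ and all $\varphi\in W^{s,p}_{\beta,0}(\Omega)\cap L^\infty(\Omega)$, $\frac12\iint_{D_\Omega}|u(x)-u(y)|^{p-2}(u(x)-u(y))[T_k(u(x)-\varphi(x))-T_k(u(y)-\varphi(y))]d\nu\le\int_\Omega f\,T_k(u-\varphi)\,dx$. *)

theory Defs
  imports "HOL-Analysis.Analysis"
begin

coinductive smooth_fun :: "('a::euclidean_space \<Rightarrow> real) \<Rightarrow> bool" where
  "(\<And>x. f differentiable (at x)) \<Longrightarrow>
   (\<forall>b\<in>Basis. smooth_fun (\<lambda>x. frechet_derivative f (at x) b)) \<Longrightarrow> smooth_fun f"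

definition smooth_bounded_domain :: "'a::euclidean_space set \<Rightarrow> bool" where
  "smooth_bounded_domain \<Omega> \<longleftrightarrow> open \<Omega> \<and> connected \<Omega> \<and> bounded \<Omega> \<and> \<Omega> \<noteq> {} \<and>
     (\<exists>\<rho>. smooth_fun \<rho> \<and> \<Omega> = {x. \<rho> x < 0} \<and>
          (\<forall>x. \<rho> x = 0 \<longrightarrow> frechet_derivative \<rho> (at x) \<noteq> (\<lambda>v. 0)))"

definition Cc_inf :: "'a::euclidean_space set \<Rightarrow> ('a \<Rightarrow> real) set" where
  "Cc_inf \<Omega> = {\<phi>. smooth_fun \<phi> \<and> compact (closure {x. \<phi> x \<noteq> 0}) \<and>
                    closure {x. \<phi> x \<noteq> 0} \<subseteq> \<Omega>}"

definition mu_meas :: "real \<Rightarrow> 'a::euclidean_space measure" where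
  "mu_meas \<beta> = density lebesgue (\<lambda>x. ennreal (norm x powr (-2 * \<beta>)))"

definition nu_meas :: "real \<Rightarrow> real \<Rightarrow> real \<Rightarrow> ('a::euclidean_space \<times> 'a) measure" where
  "nu_meas s p \<beta> = density (lebesgue \<Otimes>\<^sub>M lebesgue)
     (\<lambda>(x, y). ennreal (1 / (norm (x - y) powr (real DIM('a) + p * s)
                              * norm x powr \<beta> * norm y powr \<beta>)))"

definition D_Omega :: "'a set \<Rightarrow> ('a \<times> 'a) set" where
  "D_Omega \<Omega> = UNIV - ((UNIV - \<Omega>) \<times> (UNIV - \<Omega>))"

text \<open>W^{s,p}_{beta,0}(Omega): closure of C_c^infinity(Omega) w.r.t. the norm
  (int_Omega |phi|^p dmu)^(1/p) + (int_Omega int_Omega |phi x - phi y|^p dnu)^(1/p),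
  elements extended by zero outside Omega.  Convergence in this norm is expressed as
  convergence to 0 of both p-th power integrals.\<close>
definition Wspace :: "real \<Rightarrow> real \<Rightarrow> real \<Rightarrow> 'a::euclidean_space set \<Rightarrow> ('a \<Rightarrow> real) set" where
  "Wspace s p \<beta> \<Omega> = {v. v \<in> borel_measurable lebesgue \<and> (\<forall>x. x \<notin> \<Omega> \<longrightarrow> v x = 0) \<and>
     (\<exists>\<phi>::nat \<Rightarrow> 'a \<Rightarrow> real. (\<forall>n. \<phi> n \<in> Cc_inf \<Omega>) \<and>
        (\<lambda>n. \<integral>\<^sup>+ x. ennreal (\<bar>\<phi> n x - v x\<bar> powr p) * indicator \<Omega> x \<partial>(mu_meas \<beta>))
           \<longlonglongrightarrow> 0 \<and>
        (\<lambda>n. \<integral>\<^sup>+ z. ennreal (\<bar>(\<phi> n (fst z) - v (fst z)) - (\<phi> n (snd z) - v (snd z))\<bar> powr p)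
                     * indicator (\<Omega> \<times> \<Omega>) z \<partial>(nu_meas s p \<beta>)) \<longlonglongrightarrow> 0)}"

definition ess_bounded :: "('a::euclidean_space \<Rightarrow> real) \<Rightarrow> bool" where
  "ess_bounded v \<longleftrightarrow> (\<exists>C. AE x in lebesgue. \<bar>v x\<bar> \<le> C)"

definition trunc :: "real \<Rightarrow> real \<Rightarrow> real" where
  "trunc k a = max (- k) (min k a)"

definition R_set :: "('a \<Rightarrow> real) \<Rightarrow> real \<Rightarrow> ('a \<times> 'a) set" where
  "R_set u h = {(x, y). h + 1 \<le> max \<bar>u x\<bar> \<bar>u y\<bar> \<and>
                        (min \<bar>u x\<bar> \<bar>u y\<bar> \<le> h \<or> u x * u y < 0)}"

definition ppow :: "real \<Rightarrow> real \<Rightarrow> real" where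
  "ppow p a = \<bar>a\<bar> powr (p - 2) * a"

definition entropy_solution ::
  "real \<Rightarrow> real \<Rightarrow> real \<Rightarrow> 'a::euclidean_space set \<Rightarrow> ('a \<Rightarrow> real) \<Rightarrow> ('a \<Rightarrow> real) \<Rightarrow> bool" where
  "entropy_solution s p \<beta> \<Omega> f u \<longleftrightarrow>
     u \<in> borel_measurable lebesgue \<and> (\<forall>x. x \<notin> \<Omega> \<longrightarrow> u x = 0) \<and>
     (\<forall>k>0. (\<lambda>x. trunc k (u x)) \<in> Wspace s p \<beta> \<Omega>) \<and>
     ((\<lambda>h. \<integral>\<^sup>+ z. ennreal (\<bar>u (fst z) - u (snd z)\<bar> powr (p - 1)) * indicator (R_set u h) z
              \<partial>(nu_meas s p \<beta>)) \<longlongrightarrow> 0) at_top \<and>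
     (\<forall>k>0. \<forall>\<phi>\<in>Wspace s p \<beta> \<Omega>. ess_bounded \<phi> \<longrightarrow>
        (let g = (\<lambda>z. ppow p (u (fst z) - u (snd z)) *
                   (trunc k (u (fst z) - \<phi> (fst z)) - trunc k (u (snd z) - \<phi> (snd z))))
         in set_integrable (nu_meas s p \<beta>) (D_Omega \<Omega>) g \<and>
            1 / 2 * (LINT z : D_Omega \<Omega> | nu_meas s p \<beta>. g z)
              \<le> (LINT x : \<Omega> | lebesgue. f x * trunc k (u x - \<phi> x))))"

end

theory Submission imports Defs begin


lemma sigma_finite_lebesgue: "sigma_finite_measure (lebesgue :: 'a::euclidean_space measure)"
proof -
  obtain A :: "'a set set" where A: "countable A" "A \<subseteq> sets lborel" "\<Union>A = space lborel" "\<forall>a\<in>A. emeasure lborel a \<noteq> \<infinity>"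
    using lborel.sigma_finite_countable by blast
  show ?thesis
    apply (rule sigma_finite_measure.intro)
    apply (rule exI[of _ A])
    using A by (auto simp: subset_eq)
qed

lemma smooth_fun_diff:
  assumes "smooth_fun f" "smooth_fun g"
  shows "smooth_fun (\<lambda>x. f x - g x)"
proof (rule smooth_fun.coinduct[where X="\<lambda>h. \<exists>f g. h = (\<lambda>x. f x - g x) \<and> smooth_fun f \<and> smooth_fun g"])
  show "\<exists>f' g'. (\<lambda>x. f x - g x) = (\<lambda>x. f' x - g' x) \<and> smooth_fun f' \<and> smooth_fun g'"
    using assms by blast
next
  fix h :: "'a \<Rightarrow> real"
  assume "\<exists>f g. h = (\<lambda>x. f x - g x) \<and> smooth_fun f \<and> smooth_fun g"
  then obtain f g where h: "h = (\<lambda>x. f x - g x)" and f: "smooth_fun f" and g: "smooth_fun g" by blast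
  have df: "\<And>x. f differentiable (at x)" and dg: "\<And>x. g differentiable (at x)"
    using f g by (auto elim: smooth_fun.cases)
  have sf: "\<forall>b\<in>Basis. smooth_fun (\<lambda>x. frechet_derivative f (at x) b)"
    and sg: "\<forall>b\<in>Basis. smooth_fun (\<lambda>x. frechet_derivative g (at x) b)"
    using f g by (auto elim: smooth_fun.cases)
  have fd: "frechet_derivative h (at x) = (\<lambda>v. frechet_derivative f (at x) v - frechet_derivative g (at x) v)" for x
  proof -
    have "(h has_derivative (\<lambda>v. frechet_derivative f (at x) v - frechet_derivative g (at x) v)) (at x)"
      unfolding h using df[of x] dg[of x] by (intro has_derivative_diff) (auto simp: frechet_derivative_works)
    then show ?thesis by (metis frechet_derivative_at)
  qed
  have d: "\<forall>x. h differentiable at x" unfolding h using df dg by (intro allI differentiable_diff) auto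
  have b: "\<forall>b\<in>Basis. (\<exists>f g. (\<lambda>x. frechet_derivative h (at x) b) = (\<lambda>x. f x - g x) \<and> smooth_fun f \<and> smooth_fun g)"
  proof
    fix b :: 'a assume "b \<in> Basis"
    then show "\<exists>f' g'. (\<lambda>x. frechet_derivative h (at x) b) = (\<lambda>x. f' x - g' x) \<and> smooth_fun f' \<and> smooth_fun g'"
      using sf sg by (intro exI[of _ "\<lambda>x. frechet_derivative f (at x) b"] exI[of _ "\<lambda>x. frechet_derivative g (at x) b"]) (simp add: fd)
  qed
  show "\<exists>f'. h = f' \<and> (\<forall>x. f' differentiable at x) \<and>
       (\<forall>b\<in>Basis. (\<exists>f g. (\<lambda>x. frechet_derivative f' (at x) b) = (\<lambda>x. f x - g x) \<and> smooth_fun f \<and> smooth_fun g) \<or>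
          smooth_fun (\<lambda>x. frechet_derivative f' (at x) b))"
    using d b by blast
qed

lemma smooth_fun_zero: "smooth_fun (\<lambda>x::'a::euclidean_space. 0)"
proof -
  have "X = (\<lambda>x::'a. 0::real) \<Longrightarrow> smooth_fun X" for X
  proof (coinduction arbitrary: X rule: smooth_fun.coinduct)
    case (smooth_fun X)
    have "frechet_derivative (\<lambda>x::'a. 0::real) (at x) = (\<lambda>v. 0)" for x
      by (metis frechet_derivative_at has_derivative_const)
    then show ?case using smooth_fun by auto
  qed
  then show ?thesis by simp
qed



lemma smooth_fun_continuous: "smooth_fun f \<Longrightarrow> continuous_on UNIV f"
  by (metis continuous_at_imp_continuous_on differentiable_imp_continuous_within smooth_fun.cases)

lemma smooth_fun_meas: "smooth_fun f \<Longrightarrow> f \<in> borel_measurable lebesgue"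
  using continuous_imp_measurable_on_sets_lebesgue[of UNIV f] smooth_fun_continuous[of f]
  by (simp add: lebesgue_on_UNIV_eq)

lemma Cc_inf_diff: "f \<in> Cc_inf \<Omega> \<Longrightarrow> g \<in> Cc_inf \<Omega> \<Longrightarrow> (\<lambda>x. f x - g x) \<in> Cc_inf \<Omega>"
proof -
  assume f: "f \<in> Cc_inf \<Omega>" and g: "g \<in> Cc_inf \<Omega>"
  let ?F = "closure {x. f x \<noteq> 0}" and ?G = "closure {x. g x \<noteq> 0}"
  have sub: "closure {x. f x - g x \<noteq> 0} \<subseteq> ?F \<union> ?G"
  proof (rule closure_minimal)
    have "{x. f x - g x \<noteq> 0} \<subseteq> {x. f x \<noteq> 0} \<union> {x. g x \<noteq> 0}" by auto
    then show "{x. f x - g x \<noteq> 0} \<subseteq> ?F \<union> ?G"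
      using closure_subset[of "{x. f x \<noteq> 0}"] closure_subset[of "{x. g x \<noteq> 0}"] by blast
  next
    show "closed (?F \<union> ?G)" by (intro closed_Un closed_closure)
  qed
  have K: "compact (?F \<union> ?G)" using f g by (auto simp: Cc_inf_def)
  have "compact ((?F \<union> ?G) \<inter> closure {x. f x - g x \<noteq> 0})"
    by (rule compact_Int_closed[OF K closed_closure])
  moreover have "(?F \<union> ?G) \<inter> closure {x. f x - g x \<noteq> 0} = closure {x. f x - g x \<noteq> 0}"
    using sub by blast
  ultimately have c: "compact (closure {x. f x - g x \<noteq> 0})" by simp
  have sm: "smooth_fun (\<lambda>x. f x - g x)" using f g by (intro smooth_fun_diff) (auto simp: Cc_inf_def)
  have "?F \<subseteq> \<Omega>" "?G \<subseteq> \<Omega>" using f g by (auto simp: Cc_inf_def)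
  then have "closure {x. f x - g x \<noteq> 0} \<subseteq> \<Omega>" using sub by blast
  then show ?thesis using c sm unfolding Cc_inf_def by blast
qed

lemma Cc_inf_zero: "(\<lambda>x. 0) \<in> Cc_inf \<Omega>"
  by (simp add: Cc_inf_def smooth_fun_zero)

lemma meas_pair_fst: "(f::'a::euclidean_space\<Rightarrow>real) \<in> borel_measurable lebesgue \<Longrightarrow>
   (\<lambda>z. f (fst z)) \<in> borel_measurable (lebesgue \<Otimes>\<^sub>M (lebesgue::'a measure))"
  using measurable_comp[OF measurable_fst, of f] by (simp add: o_def)
lemma meas_pair_snd: "(f::'a::euclidean_space\<Rightarrow>real) \<in> borel_measurable lebesgue \<Longrightarrow>
   (\<lambda>z. f (snd z)) \<in> borel_measurable (lebesgue \<Otimes>\<^sub>M (lebesgue::'a measure))"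
  using measurable_comp[OF measurable_snd, of f] by (simp add: o_def)

lemma kernel_meas: "(\<lambda>(x::'a::euclidean_space, y). ennreal (1 / (norm (x - y) powr (real DIM('a) + p * s)
                              * norm x powr \<beta> * norm y powr \<beta>))) \<in> borel_measurable (lebesgue \<Otimes>\<^sub>M lebesgue)"
proof -
  have i: "id \<in> borel_measurable (lebesgue :: 'a measure)" by simp
  have a: "(\<lambda>z. fst z :: 'a) \<in> borel_measurable (lebesgue \<Otimes>\<^sub>M (lebesgue::'a measure))"
    using measurable_comp[OF measurable_fst i] by (simp add: o_def)
  have b: "(\<lambda>z. snd z :: 'a) \<in> borel_measurable (lebesgue \<Otimes>\<^sub>M (lebesgue::'a measure))"
    using measurable_comp[OF measurable_snd i] by (simp add: o_def)
  have c: "(\<lambda>z. fst z - snd z :: 'a) \<in> borel_measurable (lebesgue \<Otimes>\<^sub>M (lebesgue::'a measure))"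
    using borel_measurable_diff[OF a b] .
  have n1: "(\<lambda>z. norm (fst z - snd z :: 'a)) \<in> borel_measurable (lebesgue \<Otimes>\<^sub>M (lebesgue::'a measure))"
    using measurable_compose[OF c borel_measurable_norm] .
  have n2: "(\<lambda>z. norm (fst z :: 'a)) \<in> borel_measurable (lebesgue \<Otimes>\<^sub>M (lebesgue::'a measure))"
    using measurable_compose[OF a borel_measurable_norm] .
  have n3: "(\<lambda>z. norm (snd z :: 'a)) \<in> borel_measurable (lebesgue \<Otimes>\<^sub>M (lebesgue::'a measure))"
    using measurable_compose[OF b borel_measurable_norm] .
  have r: "(\<lambda>z. 1 / (norm (fst z - snd z :: 'a) powr (real DIM('a) + p * s)
                              * norm (fst z) powr \<beta> * norm (snd z) powr \<beta>)) \<in> borel_measurable (lebesgue \<Otimes>\<^sub>M (lebesgue::'a measure))"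
  proof -
    have p1: "(\<lambda>z. norm (fst z - snd z :: 'a) powr (real DIM('a) + p * s)) \<in> borel_measurable (lebesgue \<Otimes>\<^sub>M (lebesgue::'a measure))"
      by (rule powr_real_measurable[OF n1 borel_measurable_const])
    have p2: "(\<lambda>z. norm (fst z :: 'a) powr \<beta>) \<in> borel_measurable (lebesgue \<Otimes>\<^sub>M (lebesgue::'a measure))"
      by (rule powr_real_measurable[OF n2 borel_measurable_const])
    have p3: "(\<lambda>z. norm (snd z :: 'a) powr \<beta>) \<in> borel_measurable (lebesgue \<Otimes>\<^sub>M (lebesgue::'a measure))"
      by (rule powr_real_measurable[OF n3 borel_measurable_const])
    show ?thesis
      by (rule borel_measurable_divide[OF borel_measurable_const borel_measurable_times[OF borel_measurable_times[OF p1 p2] p3]])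
  qed
  have e: "(\<lambda>(x::'a::euclidean_space, y). ennreal (1 / (norm (x - y) powr (real DIM('a) + p * s)
                              * norm x powr \<beta> * norm y powr \<beta>))) = (\<lambda>z. ennreal (1 / (norm (fst z - snd z :: 'a::euclidean_space) powr (real DIM('a) + p * s)
                              * norm (fst z) powr \<beta> * norm (snd z) powr \<beta>)))"
    by (rule ext) (simp only: split_beta)
  show ?thesis unfolding e by (rule measurable_compose[OF r measurable_ennreal])
qed

lemma AE_nu: assumes "AE x in lebesgue. P x"
  shows "AE z in nu_meas s p \<beta>. P (fst z) \<and> P (snd z)"
proof -
  interpret L: sigma_finite_measure "lebesgue :: 'a::euclidean_space measure" by (rule sigma_finite_lebesgue)
  obtain N where N: "N \<in> null_sets (lebesgue::'a measure)" "{x \<in> space lebesgue. \<not> P x} \<subseteq> N"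
    using assms unfolding eventually_ae_filter by auto
  have n1: "N \<times> UNIV \<in> null_sets (lebesgue \<Otimes>\<^sub>M (lebesgue::'a measure))"
    using L.times_in_null_sets1[OF N(1), of UNIV] by simp
  have n2: "UNIV \<times> N \<in> null_sets (lebesgue \<Otimes>\<^sub>M (lebesgue::'a measure))"
    using L.times_in_null_sets2[OF _ N(1), where A=UNIV and N=lebesgue] by simp
  have "AE z in lebesgue \<Otimes>\<^sub>M (lebesgue::'a measure). z \<notin> N \<times> UNIV \<and> z \<notin> UNIV \<times> N"
    using AE_not_in[OF n1] AE_not_in[OF n2] by eventually_elim auto
  then have *: "AE z in lebesgue \<Otimes>\<^sub>M (lebesgue::'a measure). P (fst z) \<and> P (snd z)"
    by eventually_elim (use N in auto)
  have **: "(AE z in nu_meas s p \<beta>. Q z) \<longleftrightarrow> (AE z in lebesgue \<Otimes>\<^sub>M (lebesgue::'a measure).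
      0 < (\<lambda>(x::'a, y). ennreal (1 / (norm (x - y) powr (real DIM('a) + p * s)
                              * norm x powr \<beta> * norm y powr \<beta>))) z \<longrightarrow> Q z)" for Q
    unfolding nu_meas_def by (rule AE_density[OF kernel_meas])
  have "AE z in lebesgue \<Otimes>\<^sub>M (lebesgue::'a measure).
      0 < (\<lambda>(x::'a, y). ennreal (1 / (norm (x - y) powr (real DIM('a) + p * s)
                              * norm x powr \<beta> * norm y powr \<beta>))) z \<longrightarrow> P (fst z) \<and> P (snd z)"
    using * by (rule eventually_mono) (rule impI)
  then show ?thesis by (rule **[THEN iffD2])
qed



lemma powr_diff_le:
  fixes x y p :: real assumes "0 < p"
  shows "\<bar>x - y\<bar> powr p \<le> 2 powr p * (\<bar>x\<bar> powr p + \<bar>y\<bar> powr p)"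
proof -
  define m where "m = max \<bar>x\<bar> \<bar>y\<bar>"
  have "\<bar>x - y\<bar> \<le> 2 * m" unfolding m_def by linarith
  then have "\<bar>x - y\<bar> powr p \<le> (2 * m) powr p" using assms by (intro powr_mono2) auto
  also have "\<dots> = 2 powr p * m powr p" using powr_mult[of 2 m p] by (simp add: m_def)
  also have "m powr p \<le> \<bar>x\<bar> powr p + \<bar>y\<bar> powr p" unfolding m_def by (auto simp: max_def)
  then have "2 powr p * m powr p \<le> 2 powr p * (\<bar>x\<bar> powr p + \<bar>y\<bar> powr p)" by simp
  finally show ?thesis .
qed

lemma lim_diff:
  fixes X Y :: "nat \<Rightarrow> 'b \<Rightarrow> real"
  assumes p: "0 < p" and mX[measurable]: "\<And>n. X n \<in> borel_measurable M" and mY[measurable]: "\<And>n. Y n \<in> borel_measurable M"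
    and S[measurable]: "S \<in> sets M"
    and lX: "(\<lambda>n. \<integral>\<^sup>+ z. ennreal (\<bar>X n z\<bar> powr p) * indicator S z \<partial>M) \<longlonglongrightarrow> 0"
    and lY: "(\<lambda>n. \<integral>\<^sup>+ z. ennreal (\<bar>Y n z\<bar> powr p) * indicator S z \<partial>M) \<longlonglongrightarrow> 0"
  shows "(\<lambda>n. \<integral>\<^sup>+ z. ennreal (\<bar>X n z - Y n z\<bar> powr p) * indicator S z \<partial>M) \<longlonglongrightarrow> 0"
proof (rule tendsto_sandwich[of "\<lambda>_. 0"])
  let ?A = "\<lambda>n. \<integral>\<^sup>+ z. ennreal (\<bar>X n z\<bar> powr p) * indicator S z \<partial>M"
  let ?B = "\<lambda>n. \<integral>\<^sup>+ z. ennreal (\<bar>Y n z\<bar> powr p) * indicator S z \<partial>M"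
  have le: "(\<integral>\<^sup>+ z. ennreal (\<bar>X n z - Y n z\<bar> powr p) * indicator S z \<partial>M) \<le> ennreal (2 powr p) * (?A n + ?B n)" for n
  proof -
    have "(\<integral>\<^sup>+ z. ennreal (\<bar>X n z - Y n z\<bar> powr p) * indicator S z \<partial>M)
       \<le> (\<integral>\<^sup>+ z. ennreal (2 powr p) * (ennreal (\<bar>X n z\<bar> powr p) * indicator S z + ennreal (\<bar>Y n z\<bar> powr p) * indicator S z) \<partial>M)"
    proof (rule nn_integral_mono)
      fix z
      have "ennreal (\<bar>X n z - Y n z\<bar> powr p) \<le> ennreal (2 powr p * (\<bar>X n z\<bar> powr p + \<bar>Y n z\<bar> powr p))"
        using powr_diff_le[OF p] by (rule ennreal_leI)
      also have "\<dots> = ennreal (2 powr p) * (ennreal (\<bar>X n z\<bar> powr p) + ennreal (\<bar>Y n z\<bar> powr p))"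
        by (simp add: ennreal_mult ennreal_plus)
      finally show "ennreal (\<bar>X n z - Y n z\<bar> powr p) * indicator S z \<le> ennreal (2 powr p) * (ennreal (\<bar>X n z\<bar> powr p) * indicator S z + ennreal (\<bar>Y n z\<bar> powr p) * indicator S z)"
        by (auto simp: indicator_def)
    qed
    also have "\<dots> = ennreal (2 powr p) * (\<integral>\<^sup>+ z. (ennreal (\<bar>X n z\<bar> powr p) * indicator S z + ennreal (\<bar>Y n z\<bar> powr p) * indicator S z) \<partial>M)"
      by (rule nn_integral_cmult) measurable
    also have "(\<integral>\<^sup>+ z. (ennreal (\<bar>X n z\<bar> powr p) * indicator S z + ennreal (\<bar>Y n z\<bar> powr p) * indicator S z) \<partial>M) = ?A n + ?B n"
      by (rule nn_integral_add) measurable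
    finally show ?thesis .
  qed
  show "\<forall>\<^sub>F n in sequentially. 0 \<le> (\<integral>\<^sup>+ z. ennreal (\<bar>X n z - Y n z\<bar> powr p) * indicator S z \<partial>M)" by simp
  show "\<forall>\<^sub>F n in sequentially. (\<integral>\<^sup>+ z. ennreal (\<bar>X n z - Y n z\<bar> powr p) * indicator S z \<partial>M) \<le> ennreal (2 powr p) * (?A n + ?B n)"
    using le by simp
  show "(\<lambda>_. 0) \<longlonglongrightarrow> (0::ennreal)" by simp
  have "(\<lambda>n. ennreal (2 powr p) * (?A n + ?B n)) \<longlonglongrightarrow> ennreal (2 powr p) * (0 + 0)"
    by (intro ennreal_tendsto_cmult tendsto_add lX lY) simp
  then show "(\<lambda>n. ennreal (2 powr p) * (?A n + ?B n)) \<longlonglongrightarrow> 0" by simp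
qed


lemma meas_mu[simp]: "g \<in> measurable (mu_meas \<beta>) N \<longleftrightarrow> g \<in> measurable lebesgue N"
  by (simp add: mu_meas_def)
lemma sets_mu[simp]: "sets (mu_meas \<beta>) = sets lebesgue"
  by (simp add: mu_meas_def)
lemma meas_nu[simp]: "g \<in> measurable (nu_meas s p \<beta>) N \<longleftrightarrow> g \<in> measurable (lebesgue \<Otimes>\<^sub>M lebesgue) N"
  by (simp add: nu_meas_def)
lemma sets_nu[simp]: "sets (nu_meas s p \<beta>) = sets (lebesgue \<Otimes>\<^sub>M lebesgue)"
  by (simp add: nu_meas_def)

lemma Wspace_diff:
  fixes a b :: "'a::euclidean_space \<Rightarrow> real"
  assumes p: "0 < p" and O: "\<Omega> \<in> sets lebesgue" and a: "a \<in> Wspace s p \<beta> \<Omega>" and b: "b \<in> Wspace s p \<beta> \<Omega>"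
  shows "(\<lambda>x. a x - b x) \<in> Wspace s p \<beta> \<Omega>"
proof -
  obtain fa where fa: "\<And>n. fa n \<in> Cc_inf \<Omega>"
    "(\<lambda>n. \<integral>\<^sup>+ x. ennreal (\<bar>fa n x - a x\<bar> powr p) * indicator \<Omega> x \<partial>(mu_meas \<beta>)) \<longlonglongrightarrow> 0"
    "(\<lambda>n. \<integral>\<^sup>+ z. ennreal (\<bar>(fa n (fst z) - a (fst z)) - (fa n (snd z) - a (snd z))\<bar> powr p)
                     * indicator (\<Omega> \<times> \<Omega>) z \<partial>(nu_meas s p \<beta>)) \<longlonglongrightarrow> 0"
    and am: "a \<in> borel_measurable lebesgue" and a0: "\<forall>x. x \<notin> \<Omega> \<longrightarrow> a x = 0"
    using a unfolding Wspace_def by blast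
  obtain fb where fb: "\<And>n. fb n \<in> Cc_inf \<Omega>"
    "(\<lambda>n. \<integral>\<^sup>+ x. ennreal (\<bar>fb n x - b x\<bar> powr p) * indicator \<Omega> x \<partial>(mu_meas \<beta>)) \<longlonglongrightarrow> 0"
    "(\<lambda>n. \<integral>\<^sup>+ z. ennreal (\<bar>(fb n (fst z) - b (fst z)) - (fb n (snd z) - b (snd z))\<bar> powr p)
                     * indicator (\<Omega> \<times> \<Omega>) z \<partial>(nu_meas s p \<beta>)) \<longlonglongrightarrow> 0"
    and bm: "b \<in> borel_measurable lebesgue" and b0: "\<forall>x. x \<notin> \<Omega> \<longrightarrow> b x = 0"
    using b unfolding Wspace_def by blast
  have fam: "fa n \<in> borel_measurable lebesgue" for n using fa(1)[of n] by (auto simp: Cc_inf_def intro: smooth_fun_meas)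
  have fbm: "fb n \<in> borel_measurable lebesgue" for n using fb(1)[of n] by (auto simp: Cc_inf_def intro: smooth_fun_meas)
  have OO: "\<Omega> \<times> \<Omega> \<in> sets (lebesgue \<Otimes>\<^sub>M lebesgue)" using O by (rule pair_measureI[OF _ O])
  have mX1: "(\<lambda>x. fa n x - a x) \<in> borel_measurable (mu_meas \<beta>)" for n using fam am by simp
  have mY1: "(\<lambda>x. fb n x - b x) \<in> borel_measurable (mu_meas \<beta>)" for n using fbm bm by simp
  have L1: "(\<lambda>n. \<integral>\<^sup>+ x. ennreal (\<bar>(fa n x - a x) - (fb n x - b x)\<bar> powr p) * indicator \<Omega> x \<partial>(mu_meas \<beta>)) \<longlonglongrightarrow> 0"
    by (rule lim_diff[OF p mX1 mY1 _ fa(2) fb(2)]) (simp add: O)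
  have pf: "(\<lambda>z. g (fst z)) \<in> borel_measurable (lebesgue \<Otimes>\<^sub>M (lebesgue::'a measure))"
      "(\<lambda>z. g (snd z)) \<in> borel_measurable (lebesgue \<Otimes>\<^sub>M (lebesgue::'a measure))"
    if "g \<in> borel_measurable lebesgue" for g :: "'a \<Rightarrow> real"
    using that by (auto intro: meas_pair_fst meas_pair_snd)
  have mX2: "(\<lambda>z. (fa n (fst z) - a (fst z)) - (fa n (snd z) - a (snd z))) \<in> borel_measurable (nu_meas s p \<beta>)" for n
    unfolding meas_nu by (intro borel_measurable_diff pf fam am)
  have mY2: "(\<lambda>z. (fb n (fst z) - b (fst z)) - (fb n (snd z) - b (snd z))) \<in> borel_measurable (nu_meas s p \<beta>)" for n
    unfolding meas_nu by (intro borel_measurable_diff pf fbm bm)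
  have L2: "(\<lambda>n. \<integral>\<^sup>+ z. ennreal (\<bar>((fa n (fst z) - a (fst z)) - (fa n (snd z) - a (snd z))) - ((fb n (fst z) - b (fst z)) - (fb n (snd z) - b (snd z)))\<bar> powr p)
                     * indicator (\<Omega> \<times> \<Omega>) z \<partial>(nu_meas s p \<beta>)) \<longlonglongrightarrow> 0"
    by (rule lim_diff[OF p mX2 mY2 _ fa(3) fb(3)]) (simp add: OO)
  have e1: "\<And>n x. (fa n x - fb n x) - (a x - b x) = (fa n x - a x) - (fb n x - b x)" by simp
  have e2: "\<And>n x y. ((fa n x - fb n x) - (a x - b x)) - ((fa n y - fb n y) - (a y - b y))
     = ((fa n x - a x) - (fa n y - a y)) - ((fb n x - b x) - (fb n y - b y))" by simp
  show ?thesis unfolding Wspace_def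
  proof (intro CollectI conjI exI[of _ "\<lambda>n x. fa n x - fb n x"] allI impI)
    show "(\<lambda>x. a x - b x) \<in> borel_measurable lebesgue" using am bm by simp
    show "x \<notin> \<Omega> \<Longrightarrow> a x - b x = 0" for x using a0 b0 by simp
    show "(\<lambda>x. fa n x - fb n x) \<in> Cc_inf \<Omega>" for n using fa(1) fb(1) by (rule Cc_inf_diff)
    show "(\<lambda>n. \<integral>\<^sup>+ x. ennreal (\<bar>fa n x - fb n x - (a x - b x)\<bar> powr p) * indicator \<Omega> x \<partial>mu_meas \<beta>) \<longlonglongrightarrow> 0"
      unfolding e1 by (rule L1)
    show "(\<lambda>n. \<integral>\<^sup>+ z. ennreal (\<bar>fa n (fst z) - fb n (fst z) - (a (fst z) - b (fst z)) - (fa n (snd z) - fb n (snd z) - (a (snd z) - b (snd z)))\<bar> powr p) *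
               indicator (\<Omega> \<times> \<Omega>) z \<partial>nu_meas s p \<beta>) \<longlonglongrightarrow> 0"
      unfolding e2 by (rule L2)
  qed
qed

lemma Wspace_zero: "(\<lambda>x. 0) \<in> Wspace s p \<beta> \<Omega>"
  unfolding Wspace_def
  by (intro CollectI conjI exI[of _ "\<lambda>n x. 0"] allI impI) (auto simp: Cc_inf_zero)



lemma trunc_id: "\<bar>a\<bar> \<le> k \<Longrightarrow> trunc k a = a"
  by (simp add: trunc_def)
lemma trunc_abs: "0 \<le> k \<Longrightarrow> \<bar>trunc k a\<bar> \<le> k"
  by (simp add: trunc_def)
lemma trunc_mono: "a \<le> b \<Longrightarrow> trunc k a \<le> trunc k b"
  by (simp add: trunc_def)
lemma H_mono: "0 \<le> K \<Longrightarrow> a \<le> b \<Longrightarrow> trunc M (a - trunc K a) \<le> trunc M (b - trunc K b)"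
  by (rule trunc_mono) (auto simp: trunc_def)

lemma ppow_prod_nonneg:
  assumes "\<And>a b. a \<le> b \<Longrightarrow> G a \<le> G b"
  shows "0 \<le> ppow p (a - b) * (G a - G b)"
proof -
  have "0 \<le> (a - b) * (G a - G b)"
  proof (cases "a \<le> b")
    case True then show ?thesis using assms[OF True] by (intro mult_nonpos_nonpos) auto
  next
    case False then show ?thesis using assms[of b a] by (intro mult_nonneg_nonneg) auto
  qed
  then show ?thesis unfolding ppow_def by (simp add: mult.assoc)
qed

lemma point:
  assumes "0 \<le> u" "\<bar>w\<bar> \<le> M" "k < u \<longrightarrow> w = 0" "k \<le> K"
  shows "trunc M (u - (trunc K u - w)) = w + trunc M (u - trunc K u)"
proof (cases "u \<le> k")
  case True
  then have "trunc K u = u" using assms by (intro trunc_id) auto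
  moreover have "trunc M w = w" using assms by (intro trunc_id) auto
  moreover have "trunc M 0 = 0" using assms by (intro trunc_id) auto
  ultimately show ?thesis by simp
next
  case False then show ?thesis using assms by auto
qed

lemma trunc_meas: "g \<in> borel_measurable M \<Longrightarrow> (\<lambda>x. trunc c (g x)) \<in> borel_measurable M"
  unfolding trunc_def by (intro borel_measurable_max borel_measurable_min borel_measurable_const)

lemma ppow_meas: "g \<in> borel_measurable M \<Longrightarrow> (\<lambda>x. ppow p (g x)) \<in> borel_measurable M"
  unfolding ppow_def by (intro borel_measurable_times powr_real_measurable borel_measurable_abs borel_measurable_const)

lemma set_int_mult_bounded:
  fixes f G :: "'a::euclidean_space \<Rightarrow> real"
  assumes fi: "set_integrable lebesgue \<Omega> f" and G: "G \<in> borel_measurable lebesgue" and B: "AE x in lebesgue. \<bar>G x\<bar> \<le> B"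
  shows "set_integrable lebesgue \<Omega> (\<lambda>x. f x * G x)"
proof -
  have i: "integrable lebesgue (\<lambda>x. indicator \<Omega> x *\<^sub>R f x)" using fi by (simp add: set_integrable_def)
  have m: "(\<lambda>x. indicator \<Omega> x *\<^sub>R f x) \<in> borel_measurable lebesgue" using i by (rule borel_measurable_integrable)
  have e: "(\<lambda>x. indicator \<Omega> x *\<^sub>R (f x * G x)) = (\<lambda>x. (indicator \<Omega> x *\<^sub>R f x) * G x)" by (simp add: fun_eq_iff)
  show ?thesis unfolding set_integrable_def e
  proof (rule Bochner_Integration.integrable_bound[OF integrable_mult_right[OF i, of B]])
    show "(\<lambda>x. (indicator \<Omega> x *\<^sub>R f x) * G x) \<in> borel_measurable lebesgue" by (intro borel_measurable_times m G)
    show "AE x in lebesgue. norm ((indicator \<Omega> x *\<^sub>R f x) * G x) \<le> norm (B * (indicator \<Omega> x *\<^sub>R f x))"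
      using B
    proof eventually_elim
      case (elim x)
      have "\<bar>indicator \<Omega> x *\<^sub>R f x\<bar> * \<bar>G x\<bar> \<le> \<bar>indicator \<Omega> x *\<^sub>R f x\<bar> * \<bar>B\<bar>"
        using elim by (intro mult_left_mono) auto
      then show ?case by (simp add: abs_mult mult.commute)
    qed
  qed
qed

lemma set_int_cong_f:
  fixes f G1 G2 :: "'a::euclidean_space \<Rightarrow> real"
  assumes fi: "set_integrable lebesgue \<Omega> f" and G: "G1 \<in> borel_measurable lebesgue" "G2 \<in> borel_measurable lebesgue"
    and ae: "AE x in lebesgue. G1 x = G2 x"
  shows "(LINT x:\<Omega>|lebesgue. f x * G1 x) = (LINT x:\<Omega>|lebesgue. f x * G2 x)"
proof -
  have i: "integrable lebesgue (\<lambda>x. indicator \<Omega> x *\<^sub>R f x)" using fi by (simp add: set_integrable_def)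
  have m: "(\<lambda>x. indicator \<Omega> x *\<^sub>R f x) \<in> borel_measurable lebesgue" using i by (rule borel_measurable_integrable)
  have e: "(\<lambda>x. indicator \<Omega> x *\<^sub>R (f x * G x)) = (\<lambda>x. (indicator \<Omega> x *\<^sub>R f x) * G x)" for G :: "'a \<Rightarrow> real" by (simp add: fun_eq_iff)
  show ?thesis unfolding set_lebesgue_integral_def e
    proof (rule integral_cong_AE)
    show "(\<lambda>x. indicator \<Omega> x *\<^sub>R f x * G1 x) \<in> borel_measurable lebesgue" by (rule borel_measurable_times[OF m G(1)])
    show "(\<lambda>x. indicator \<Omega> x *\<^sub>R f x * G2 x) \<in> borel_measurable lebesgue" by (rule borel_measurable_times[OF m G(2)])
    show "AE x in lebesgue. indicator \<Omega> x *\<^sub>R f x * G1 x = indicator \<Omega> x *\<^sub>R f x * G2 x"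
      using ae by (rule eventually_mono) simp
  qed
qed

lemma lim_H:
  fixes f u :: "'a::euclidean_space \<Rightarrow> real"
  assumes fi: "set_integrable lebesgue \<Omega> f" and um: "u \<in> borel_measurable lebesgue" and M: "0 < M" and k: "0 \<le> k"
  shows "(\<lambda>n. LINT x:\<Omega>|lebesgue. f x * trunc M (u x - trunc (k + real n) (u x))) \<longlonglongrightarrow> 0"
proof -
  have i: "integrable lebesgue (\<lambda>x. indicator \<Omega> x *\<^sub>R f x)" using fi by (simp add: set_integrable_def)
  have m: "(\<lambda>x. indicator \<Omega> x *\<^sub>R f x) \<in> borel_measurable lebesgue" using i by (rule borel_measurable_integrable)
  have e: "(\<lambda>x. indicator \<Omega> x *\<^sub>R (f x * G x)) = (\<lambda>x. (indicator \<Omega> x *\<^sub>R f x) * G x)" for G :: "'a \<Rightarrow> real" by (simp add: fun_eq_iff)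
  have "(\<lambda>n. integral\<^sup>L lebesgue (\<lambda>x. (indicator \<Omega> x *\<^sub>R f x) * trunc M (u x - trunc (k + real n) (u x))))
     \<longlonglongrightarrow> integral\<^sup>L lebesgue (\<lambda>x::'a. 0::real)"
  proof (rule integral_dominated_convergence[where w="\<lambda>x. M * norm (indicator \<Omega> x *\<^sub>R f x)" and M=lebesgue and f="\<lambda>x. 0" and s="\<lambda>n x. (indicator \<Omega> x *\<^sub>R f x) * trunc M (u x - trunc (k + real n) (u x))"])
    show "(\<lambda>x. 0::real) \<in> borel_measurable lebesgue" by simp
    show "(\<lambda>x. (indicator \<Omega> x *\<^sub>R f x) * trunc M (u x - trunc (k + real n) (u x))) \<in> borel_measurable lebesgue" for n
      by (intro borel_measurable_times[OF m] trunc_meas borel_measurable_diff um)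
    show "integrable lebesgue (\<lambda>x. M * norm (indicator \<Omega> x *\<^sub>R f x))"
      by (intro integrable_mult_right integrable_norm i)
    show "AE x in lebesgue. (\<lambda>n. (indicator \<Omega> x *\<^sub>R f x) * trunc M (u x - trunc (k + real n) (u x))) \<longlonglongrightarrow> 0"
    proof (rule AE_I2, rule tendsto_eventually, rule eventually_sequentiallyI)
      fix x and n :: nat assume n: "nat \<lceil>\<bar>u x\<bar>\<rceil> \<le> n"
      have "\<bar>u x\<bar> \<le> real (nat \<lceil>\<bar>u x\<bar>\<rceil>)" by linarith
      then have "\<bar>u x\<bar> \<le> k + real n" using n k by linarith
      then have "trunc (k + real n) (u x) = u x" by (rule trunc_id)
      moreover have "trunc M 0 = 0" using M by (intro trunc_id) auto
      ultimately show "(indicator \<Omega> x *\<^sub>R f x) * trunc M (u x - trunc (k + real n) (u x)) = 0" by simp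
    qed
    show "AE x in lebesgue. norm ((indicator \<Omega> x *\<^sub>R f x) * trunc M (u x - trunc (k + real n) (u x))) \<le> M * norm (indicator \<Omega> x *\<^sub>R f x)" for n
    proof (rule AE_I2)
      fix x
      have "\<bar>indicator \<Omega> x *\<^sub>R f x\<bar> * \<bar>trunc M (u x - trunc (k + real n) (u x))\<bar> \<le> \<bar>indicator \<Omega> x *\<^sub>R f x\<bar> * M"
        using M by (intro mult_left_mono trunc_abs) auto
      then show "norm ((indicator \<Omega> x *\<^sub>R f x) * trunc M (u x - trunc (k + real n) (u x))) \<le> M * norm (indicator \<Omega> x *\<^sub>R f x)"
        by (simp add: abs_mult mult.commute)
    qed
  qed
  then show ?thesis unfolding set_lebesgue_integral_def e by simp
qed



lemma D_sets: "\<Omega> \<in> sets lebesgue \<Longrightarrow> D_Omega \<Omega> \<in> sets (lebesgue \<Otimes>\<^sub>M (lebesgue::'a::euclidean_space measure))"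
proof -
  assume O: "\<Omega> \<in> sets lebesgue"
  have c: "UNIV - \<Omega> \<in> sets (lebesgue::'a measure)" using sets.compl_sets[OF O] by simp
  have "(UNIV - \<Omega>) \<times> (UNIV - \<Omega>) \<in> sets (lebesgue \<Otimes>\<^sub>M (lebesgue::'a measure))" by (rule pair_measureI[OF c c])
  then have "space (lebesgue \<Otimes>\<^sub>M (lebesgue::'a measure)) - (UNIV - \<Omega>) \<times> (UNIV - \<Omega>) \<in> sets (lebesgue \<Otimes>\<^sub>M (lebesgue::'a measure))"
    by (rule sets.compl_sets)
  then show ?thesis by (simp add: D_Omega_def space_pair_measure)
qed

lemma half:
  fixes s p \<beta> k :: real and \<Omega> :: "'a::euclidean_space set" and f u w :: "'a \<Rightarrow> real"
  assumes p: "1 < p" and O: "\<Omega> \<in> sets lebesgue"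
    and fi: "set_integrable lebesgue \<Omega> f"
    and u0: "AE x in lebesgue. 0 \<le> u x"
    and E: "entropy_solution s p \<beta> \<Omega> f u"
    and wW: "w \<in> Wspace s p \<beta> \<Omega>" and wb: "ess_bounded w"
    and k: "0 < k" and wk: "AE x in lebesgue. k < u x \<longrightarrow> w x = 0"
  shows "set_integrable (nu_meas s p \<beta>) (D_Omega \<Omega>)
           (\<lambda>z. ppow p (u (fst z) - u (snd z)) * (w (fst z) - w (snd z))) \<and>
         1 / 2 * (LINT z : D_Omega \<Omega> | nu_meas s p \<beta>.
                   ppow p (u (fst z) - u (snd z)) * (w (fst z) - w (snd z)))
         \<le> (LINT x : \<Omega> | lebesgue. f x * w x)"
proof -
  have um: "u \<in> borel_measurable lebesgue" and TW: "\<And>K. 0 < K \<Longrightarrow> (\<lambda>x. trunc K (u x)) \<in> Wspace s p \<beta> \<Omega>"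
    using E unfolding entropy_solution_def by auto
  have EI: "\<And>kk \<phi>. 0 < kk \<Longrightarrow> \<phi> \<in> Wspace s p \<beta> \<Omega> \<Longrightarrow> ess_bounded \<phi> \<Longrightarrow>
      set_integrable (nu_meas s p \<beta>) (D_Omega \<Omega>) (\<lambda>z. ppow p (u (fst z) - u (snd z)) *
                   (trunc kk (u (fst z) - \<phi> (fst z)) - trunc kk (u (snd z) - \<phi> (snd z)))) \<and>
            1 / 2 * (LINT z : D_Omega \<Omega> | nu_meas s p \<beta>. ppow p (u (fst z) - u (snd z)) *
                   (trunc kk (u (fst z) - \<phi> (fst z)) - trunc kk (u (snd z) - \<phi> (snd z))))
              \<le> (LINT x : \<Omega> | lebesgue. f x * trunc kk (u x - \<phi> x))"
    using E unfolding entropy_solution_def Let_def by blast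
  have wm: "w \<in> borel_measurable lebesgue" using wW unfolding Wspace_def by blast
  obtain C where C: "AE x in lebesgue. \<bar>w x\<bar> \<le> C" using wb unfolding ess_bounded_def by blast
  define M where "M = max C 1"
  have M0: "0 < M" unfolding M_def by simp
  have wM: "AE x in lebesgue. \<bar>w x\<bar> \<le> M" using C by (rule eventually_mono) (simp add: M_def)
  define H where "H K x = trunc M (u x - trunc K (u x))" for K x
  define Iw where "Iw z = ppow p (u (fst z) - u (snd z)) * (w (fst z) - w (snd z))" for z
  define IH where "IH K z = ppow p (u (fst z) - u (snd z)) * (H K (fst z) - H K (snd z))" for K z
  have Dm: "D_Omega \<Omega> \<in> sets (nu_meas s p \<beta>)" using D_sets[OF O] by simp
  have pf: "(\<lambda>z. g (fst z)) \<in> borel_measurable (nu_meas s p \<beta>)"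
      "(\<lambda>z. g (snd z)) \<in> borel_measurable (nu_meas s p \<beta>)"
    if "g \<in> borel_measurable lebesgue" for g :: "'a \<Rightarrow> real"
    using that by (auto intro: meas_pair_fst meas_pair_snd)
  have Hm: "H K \<in> borel_measurable lebesgue" for K
    unfolding H_def by (intro trunc_meas borel_measurable_diff um)
  have Iwm: "Iw \<in> borel_measurable (nu_meas s p \<beta>)"
    unfolding Iw_def by (intro borel_measurable_times ppow_meas borel_measurable_diff pf um wm)
  have IHm: "IH K \<in> borel_measurable (nu_meas s p \<beta>)" for K
    unfolding IH_def by (intro borel_measurable_times ppow_meas borel_measurable_diff pf um Hm)
  have step: "set_integrable (nu_meas s p \<beta>) (D_Omega \<Omega>) Iw \<and>
     1 / 2 * (LINT z : D_Omega \<Omega> | nu_meas s p \<beta>. Iw z)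
       \<le> (LINT x : \<Omega> | lebesgue. f x * w x) + (LINT x : \<Omega> | lebesgue. f x * H K x)"
    if kK: "k \<le> K" for K
  proof -
    have K0: "0 < K" using k kK by simp
    define \<phi> where "\<phi> x = trunc K (u x) - w x" for x
    have \<phi>W: "\<phi> \<in> Wspace s p \<beta> \<Omega>" unfolding \<phi>_def
      using Wspace_diff[OF _ O TW[OF K0] wW] p by simp
    have \<phi>b: "ess_bounded \<phi>" unfolding ess_bounded_def
    proof (intro exI[of _ "K + M"])
      show "AE x in lebesgue. \<bar>\<phi> x\<bar> \<le> K + M" using wM
      proof eventually_elim
        case (elim x) then show ?case using trunc_abs[of K "u x"] K0 unfolding \<phi>_def by linarith
      qed
    qed
    have Tb: "ess_bounded (\<lambda>x. trunc K (u x))" unfolding ess_bounded_def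
      using K0 trunc_abs by (intro exI[of _ K] AE_I2) auto
    define g1 where "g1 z = ppow p (u (fst z) - u (snd z)) *
                   (trunc M (u (fst z) - \<phi> (fst z)) - trunc M (u (snd z) - \<phi> (snd z)))" for z
    have E1: "set_integrable (nu_meas s p \<beta>) (D_Omega \<Omega>) g1"
      "1 / 2 * (LINT z : D_Omega \<Omega> | nu_meas s p \<beta>. g1 z) \<le> (LINT x : \<Omega> | lebesgue. f x * trunc M (u x - \<phi> x))"
      using EI[OF M0 \<phi>W \<phi>b] unfolding g1_def by auto
    have E2: "set_integrable (nu_meas s p \<beta>) (D_Omega \<Omega>) (IH K)"
      using EI[OF M0 TW[OF K0] Tb] unfolding IH_def H_def by auto
    have pt: "AE x in lebesgue. trunc M (u x - \<phi> x) = w x + H K x"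
      using u0 wM wk
    proof eventually_elim
      case (elim x) then show ?case unfolding \<phi>_def H_def using point[of "u x" "w x" M k K] kK by simp
    qed
    have aeg: "AE z in nu_meas s p \<beta>. g1 z = Iw z + IH K z"
      using AE_nu[OF pt, of s p \<beta>]
    proof (rule eventually_mono)
      fix z assume "trunc M (u (fst z) - \<phi> (fst z)) = w (fst z) + H K (fst z) \<and>
                    trunc M (u (snd z) - \<phi> (snd z)) = w (snd z) + H K (snd z)"
      then show "g1 z = Iw z + IH K z" unfolding g1_def Iw_def IH_def by (simp add: algebra_simps)
    qed
    have g1m: "g1 \<in> borel_measurable (nu_meas s p \<beta>)"
      unfolding g1_def \<phi>_def
      by (intro borel_measurable_times ppow_meas borel_measurable_diff pf um wm trunc_meas)
    have dint: "set_integrable (nu_meas s p \<beta>) (D_Omega \<Omega>) (\<lambda>z. g1 z - IH K z)"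
      by (rule set_integral_diff(1)[OF E1(1) E2])
    have aeD: "AE z \<in> D_Omega \<Omega> in nu_meas s p \<beta>. Iw z = g1 z - IH K z"
      using aeg by (rule eventually_mono) simp
    have Iwi: "set_integrable (nu_meas s p \<beta>) (D_Omega \<Omega>) Iw"
      using set_integrable_cong_AE[OF Iwm _ aeD Dm] dint g1m IHm by (simp add: borel_measurable_diff)
    have "(LINT z : D_Omega \<Omega> | nu_meas s p \<beta>. Iw z) = (LINT z : D_Omega \<Omega> | nu_meas s p \<beta>. g1 z - IH K z)"
      by (rule set_lebesgue_integral_cong_AE[OF Dm Iwm _ aeD]) (intro borel_measurable_diff g1m IHm)
    also have "\<dots> = (LINT z : D_Omega \<Omega> | nu_meas s p \<beta>. g1 z) - (LINT z : D_Omega \<Omega> | nu_meas s p \<beta>. IH K z)"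
      by (rule set_integral_diff(2)[OF E1(1) E2])
    finally have eqI: "(LINT z : D_Omega \<Omega> | nu_meas s p \<beta>. Iw z) = (LINT z : D_Omega \<Omega> | nu_meas s p \<beta>. g1 z) - (LINT z : D_Omega \<Omega> | nu_meas s p \<beta>. IH K z)" .
    have IHnn: "0 \<le> (LINT z : D_Omega \<Omega> | nu_meas s p \<beta>. IH K z)"
      unfolding set_lebesgue_integral_def
    proof (rule integral_nonneg_AE, rule AE_I2)
      fix z
      have "0 \<le> IH K z" unfolding IH_def H_def
        by (rule ppow_prod_nonneg) (rule H_mono, use K0 in auto)
      then show "0 \<le> indicator (D_Omega \<Omega>) z *\<^sub>R IH K z" by (simp add: indicator_def)
    qed
    have wi: "set_integrable lebesgue \<Omega> (\<lambda>x. f x * w x)" by (rule set_int_mult_bounded[OF fi wm wM])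
    have Hb: "AE x in lebesgue. \<bar>H K x\<bar> \<le> M" using M0 by (intro AE_I2) (simp add: H_def trunc_abs)
    have Hi: "set_integrable lebesgue \<Omega> (\<lambda>x. f x * H K x)" by (rule set_int_mult_bounded[OF fi Hm Hb])
    have "(LINT x : \<Omega> | lebesgue. f x * trunc M (u x - \<phi> x)) = (LINT x : \<Omega> | lebesgue. f x * (w x + H K x))"
      by (rule set_int_cong_f[OF fi _ _ pt]) (auto simp: \<phi>_def intro!: trunc_meas borel_measurable_diff borel_measurable_add um wm Hm)
    also have "\<dots> = (LINT x : \<Omega> | lebesgue. f x * w x + f x * H K x)" by (simp add: distrib_left)
    also have "\<dots> = (LINT x : \<Omega> | lebesgue. f x * w x) + (LINT x : \<Omega> | lebesgue. f x * H K x)"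
      by (rule set_integral_add(2)[OF wi Hi])
    finally have rhs: "(LINT x : \<Omega> | lebesgue. f x * trunc M (u x - \<phi> x)) = (LINT x : \<Omega> | lebesgue. f x * w x) + (LINT x : \<Omega> | lebesgue. f x * H K x)" .
    show ?thesis using Iwi E1(2) eqI IHnn rhs by simp
  qed
  have lim: "(\<lambda>n. (LINT x : \<Omega> | lebesgue. f x * w x) + (LINT x : \<Omega> | lebesgue. f x * H (k + real n) x))
      \<longlonglongrightarrow> (LINT x : \<Omega> | lebesgue. f x * w x) + 0"
    unfolding H_def by (intro tendsto_add tendsto_const lim_H[OF fi um M0]) (use k in simp)
  have "1 / 2 * (LINT z : D_Omega \<Omega> | nu_meas s p \<beta>. Iw z) \<le> (LINT x : \<Omega> | lebesgue. f x * w x) + 0"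
    by (rule LIMSEQ_le_const[OF lim]) (use step k in auto)
  then show ?thesis using step[of k] unfolding Iw_def by simp
qed


theorem lemma3p7:
  fixes s p \<beta> k :: real and \<Omega> :: "'a::euclidean_space set" and f u w :: "'a \<Rightarrow> real"
  assumes "0 < s" "s < 1" "1 < p" "p < real DIM('a)" "p * s < real DIM('a)"
    and "0 \<le> \<beta>" "\<beta> < (real DIM('a) - p * s) / 2"
    and "smooth_bounded_domain \<Omega>" "0 \<in> \<Omega>"
    and "set_integrable lebesgue \<Omega> f"
    and "AE x in lebesgue. x \<in> \<Omega> \<longrightarrow> 0 \<le> f x"
    and "\<not> (AE x in lebesgue. x \<in> \<Omega> \<longrightarrow> f x = 0)"
    and "AE x in lebesgue. 0 \<le> u x"
    and "entropy_solution s p \<beta> \<Omega> f u"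
    and "w \<in> Wspace s p \<beta> \<Omega>" "ess_bounded w"
    and "0 < k" "AE x in lebesgue. k < u x \<longrightarrow> w x = 0"
  shows "set_integrable (nu_meas s p \<beta>) (D_Omega \<Omega>)
           (\<lambda>z. ppow p (u (fst z) - u (snd z)) * (w (fst z) - w (snd z))) \<and>
         1 / 2 * (LINT z : D_Omega \<Omega> | nu_meas s p \<beta>.
                   ppow p (u (fst z) - u (snd z)) * (w (fst z) - w (snd z)))
         = (LINT x : \<Omega> | lebesgue. f x * w x)"
proof -
  have op: "open \<Omega>" using assms(8) unfolding smooth_bounded_domain_def by blast
  have O: "\<Omega> \<in> sets lebesgue" using borel_open[OF op] by simp
  note H1 = half[OF assms(3) O assms(10) assms(13) assms(14) assms(15) assms(16) assms(17) assms(18)]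
  have mW: "(\<lambda>x. 0 - w x) \<in> Wspace s p \<beta> \<Omega>"
    using Wspace_diff[OF _ O Wspace_zero assms(15)] assms(3) by simp
  have mb: "ess_bounded (\<lambda>x. 0 - w x)" using assms(16) unfolding ess_bounded_def by simp
  have mk: "AE x in lebesgue. k < u x \<longrightarrow> 0 - w x = 0" using assms(18) by (rule eventually_mono) simp
  note H2 = half[OF assms(3) O assms(10) assms(13) assms(14) mW mb assms(17) mk]
  let ?I = "\<lambda>z. ppow p (u (fst z) - u (snd z)) * (w (fst z) - w (snd z))"
  have e: "(\<lambda>z. ppow p (u (fst z) - u (snd z)) * ((0 - w (fst z)) - (0 - w (snd z)))) = (\<lambda>z. - ?I z)"
    by (simp add: fun_eq_iff algebra_simps)
  have e2: "(\<lambda>x. f x * (0 - w x)) = (\<lambda>x. - (f x * w x))" by (simp add: fun_eq_iff)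
  have "1 / 2 * (LINT z : D_Omega \<Omega> | nu_meas s p \<beta>. - ?I z) \<le> (LINT x : \<Omega> | lebesgue. - (f x * w x))"
    using H2 unfolding e e2 by simp
  then have "(LINT x : \<Omega> | lebesgue. f x * w x) \<le> 1 / 2 * (LINT z : D_Omega \<Omega> | nu_meas s p \<beta>. ?I z)"
    unfolding set_lebesgue_integral_def by simp
  then show ?thesis using H1 by linarith
qed

end
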